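(* Fix the uniform prior $P$ on $\{1,\dots,n\}^T$, a utility function $u:\mathcal{Z}\times\mathcal{H}\to\mathbb{R}$, an amplitude $\lambda\ge0$ and a decay $\gamma\in(0,1)$. If Adaptive Sampling SGD is run for $T$ iterations, its posterior $Q$ satisfies $$D_{KL}(Q\|P)\le\sum_{t=2}^T\mathbb{E}_{(i_1,\dots,i_t)\sim Q}\frac{\lambda}{n}\sum_{i=1}^n\Bigg[\sum_{j=1}^{N_{i_t,t}}u(z_{i_t},h_{\tau_{i_t,j}})\gamma^{N_{i_t,t}-j}-\sum_{k=1}^{N_{i,t}}u(z_i,h_{\tau_{i,k}})\gamma^{N_{i,t}-k}\Bigg].$$
   Context: Adaptive Sampling SGD: inputs are examples $(z_1,\dots,z_n)\in\mathcal{Z}^n$, an initial hypothesis $h_0\in\mathcal{H}$, update rules $G_t:\mathcal{H}\times\mathcal{Z}\to\mathcal{H}$, utility $u$, amplitude $\lambda$, decay $\gamma$. Initialize weights $w_1=\dots=w_n=1$. For $t=1,\dots,T$: draw $i_t$ with conditional probability $Q_t(i)=Q(i_t=i\mid i_1,\dots,i_{t-1})=w_i/\sum_{j=1}^nw_j$; set $h_t=G_t(h_{t-1},z_{i_t})$; update $w_{i_t}\leftarrow w_{i_t}^{\gamma}\exp(\lambda u(z_{i_t},h_t))$. Output $h_T$. The posterior $Q$ is the resulting distribution of $(i_1,\dots,i_T)$ on $\{1,\dots,n\}^T$; $D_{KL}(Q\|P)=\mathbb{E}_{Q}\ln(Q/P)$. Notation: $N_{i,t}=|\{t'<t: i_{t'}=i\}|$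 is the number of times index $i$ was chosen before iteration $t$; $\tau_{i,j}$ is the $j$-th iteration at which $i$ was chosen. Sums with upper limit $0$ are $0$. *)

theory Defs
  imports "HOL-Analysis.Analysis"
begin

text \<open>Examples are z 1, ..., z n; an index sequence
(i_1,...,i_T) is a function s with s t = i_t for t in {1..T}
(extensional, i.e. an element of PiE {1..T} (\<lambda>_. {1..n})).\<close>

definition seqs :: "nat \<Rightarrow> nat \<Rightarrow> (nat \<Rightarrow> nat) set" where
  "seqs n T = PiE {1..T} (\<lambda>_. {1..n})"

fun hyp :: "'h \<Rightarrow> (nat \<Rightarrow> 'h \<Rightarrow> 'z \<Rightarrow> 'h) \<Rightarrow> (nat \<Rightarrow> 'z) \<Rightarrow> (nat \<Rightarrow> nat) \<Rightarrow> nat \<Rightarrow> 'h" where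
  "hyp h0 G z s 0 = h0"
| "hyp h0 G z s (Suc t) = G (Suc t) (hyp h0 G z s t) (z (s (Suc t)))"

fun weight :: "'h \<Rightarrow> (nat \<Rightarrow> 'h \<Rightarrow> 'z \<Rightarrow> 'h) \<Rightarrow> (nat \<Rightarrow> 'z) \<Rightarrow> ('z \<Rightarrow> 'h \<Rightarrow> real)
    \<Rightarrow> real \<Rightarrow> real \<Rightarrow> (nat \<Rightarrow> nat) \<Rightarrow> nat \<Rightarrow> nat \<Rightarrow> real" where
  "weight h0 G z u lam gam s 0 i = 1"
| "weight h0 G z u lam gam s (Suc t) i =
     (if i = s (Suc t)
      then (weight h0 G z u lam gam s t i) powr gam * exp (lam * u (z i) (hyp h0 G z s (Suc t)))
      else weight h0 G z u lam gam s t i)"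

definition condprob where
  "condprob n h0 G z u lam gam s t i =
     weight h0 G z u lam gam s (t - 1) i / (\<Sum>j=1..n. weight h0 G z u lam gam s (t - 1) j)"

definition posterior where
  "posterior n T h0 G z u lam gam s = (\<Prod>t=1..T. condprob n h0 G z u lam gam s t (s t))"

definition prior :: "nat \<Rightarrow> nat \<Rightarrow> (nat \<Rightarrow> nat) \<Rightarrow> real" where
  "prior n T s = 1 / real n ^ T"

definition KL where
  "KL n T h0 G z u lam gam =
     (\<Sum>s\<in>seqs n T. posterior n T h0 G z u lam gam s *
        ln (posterior n T h0 G z u lam gam s / prior n T s))"

definition Ncount :: "(nat \<Rightarrow> nat) \<Rightarrow> nat \<Rightarrow> nat \<Rightarrow> nat" where
  "Ncount s i t = card {t'. 1 \<le> t' \<and> t' < t \<and> s t' = i}"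

definition tau :: "nat \<Rightarrow> (nat \<Rightarrow> nat) \<Rightarrow> nat \<Rightarrow> nat \<Rightarrow> nat" where
  "tau T s i j = sorted_list_of_set {t'\<in>{1..T}. s t' = i} ! (j - 1)"

end

theory Submission
  imports Defs
begin

lemma card_less_nth:
  fixes xs :: "nat list"
  assumes s: "sorted_wrt (<) xs" and p: "p < length xs"
  shows "card {x \<in> set xs. x < xs ! p} = p"
proof -
  have d: "distinct xs" using s by (simp add: strict_sorted_iff)
  have "{x \<in> set xs. x < xs ! p} = (!) xs ` {..<p}"
  proof (intro equalityI subsetI)
    fix x assume "x \<in> {x \<in> set xs. x < xs ! p}"
    then have x: "x \<in> set xs" "x < xs ! p" by auto
    then obtain q where q: "q < length xs" "x = xs ! q" by (auto simp: in_set_conv_nth)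
    have "q < p"
    proof (rule ccontr)
      assume "\<not> q < p"
      then have "p \<le> q" by simp
      then have "xs ! p \<le> xs ! q" using s q
        by (metis le_less sorted_wrt_nth_less)
      then show False using x q by simp
    qed
    then show "x \<in> (!) xs ` {..<p}" using q by auto
  next
    fix x assume "x \<in> (!) xs ` {..<p}"
    then obtain q where q: "q < p" "x = xs ! q" by auto
    then show "x \<in> {x \<in> set xs. x < xs ! p}" using s p by (auto simp: sorted_wrt_nth_less)
  qed
  moreover have "inj_on ((!) xs) {..<p}" using d p
    by (auto simp: inj_on_def nth_eq_iff_index_eq)
  ultimately show ?thesis by (simp add: card_image)
qed

lemma tau_key:
  assumes "1 \<le> t'" "t' \<le> T" "s t' = i"
  shows "tau T s i (Ncount s i t' + 1) = t'"
proof -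
  define S where "S = {t'\<in>{1..T}. s t' = i}"
  define xs where "xs = sorted_list_of_set S"
  have fin: "finite S" unfolding S_def by simp
  have sx: "sorted_wrt (<) xs" unfolding xs_def by (rule strict_sorted_list_of_set)
  have setx: "set xs = S" unfolding xs_def using fin by simp
  have "t' \<in> set xs" using assms setx S_def by auto
  then obtain p where p: "p < length xs" "xs ! p = t'" by (auto simp: in_set_conv_nth)
  have "{t''. 1 \<le> t'' \<and> t'' < t' \<and> s t'' = i} = {x \<in> set xs. x < xs ! p}"
  proof (rule set_eqI)
    fix x
    show "x \<in> {t''. 1 \<le> t'' \<and> t'' < t' \<and> s t'' = i} \<longleftrightarrow> x \<in> {x \<in> set xs. x < xs ! p}"
      unfolding setx p(2) S_def using assms(2) by auto
  qed
  then have Np: "Ncount s i t' = p" unfolding Ncount_def using card_less_nth[OF sx p(1)] by simp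
  show ?thesis unfolding tau_def S_def[symmetric] xs_def[symmetric] Np using p(2) by simp
qed

lemma Ncount_Suc:
  "Ncount s i (Suc (Suc t)) = Ncount s i (Suc t) + (if s (Suc t) = i then 1 else 0)"
proof -
  have fin: "finite {t'. 1 \<le> t' \<and> t' < Suc t \<and> s t' = i}" by (rule finite_subset[of _ "{..<Suc t}"]) auto
  show ?thesis
  proof (cases "s (Suc t) = i")
    case True
    then have "{t'. 1 \<le> t' \<and> t' < Suc (Suc t) \<and> s t' = i} = insert (Suc t) {t'. 1 \<le> t' \<and> t' < Suc t \<and> s t' = i}"
      by auto
    then show ?thesis using True fin unfolding Ncount_def by simp
  next
    case False
    then have "{t'. 1 \<le> t' \<and> t' < Suc (Suc t) \<and> s t' = i} = {t'. 1 \<le> t' \<and> t' < Suc t \<and> s t' = i}"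
      using less_Suc_eq by auto
    then show ?thesis using False unfolding Ncount_def by simp
  qed
qed

lemma weight_pos: "weight h0 G z u lam gam s t i > 0"
  by (induction t) auto

lemma ln_weight:
  "t < T \<Longrightarrow> ln (weight h0 G z u lam gam s t i) = lam * (\<Sum>k=1..Ncount s i (Suc t).
     u (z i) (hyp h0 G z s (tau T s i k)) * gam ^ (Ncount s i (Suc t) - k))"
proof (induction t)
  case 0
  have "Ncount s i 1 = 0" unfolding Ncount_def by simp
  then show ?case by simp
next
  case (Suc t)
  define N where "N = Ncount s i (Suc t)"
  define f where "f k = u (z i) (hyp h0 G z s (tau T s i k))" for k
  have IH: "ln (weight h0 G z u lam gam s t i) = lam * (\<Sum>k=1..N. f k * gam ^ (N - k))"
    using Suc by (simp add: N_def f_def)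
  have w: "weight h0 G z u lam gam s t i > 0" by (rule weight_pos)
  show ?case
  proof (cases "i = s (Suc t)")
    case True
    have NS: "Ncount s i (Suc (Suc t)) = N + 1" using True by (simp add: Ncount_Suc N_def)
    have tk: "tau T s i (N + 1) = Suc t" unfolding N_def
      by (rule tau_key) (use Suc True in auto)
    have "(\<Sum>k=1..N+1. f k * gam ^ (N + 1 - k)) = (\<Sum>k=1..N. f k * gam ^ (N + 1 - k)) + f (N+1)"
      by simp
    also have "(\<Sum>k=1..N. f k * gam ^ (N + 1 - k)) = gam * (\<Sum>k=1..N. f k * gam ^ (N - k))"
      unfolding sum_distrib_left
      by (rule sum.cong) (auto simp: Suc_diff_le)
    finally have e: "(\<Sum>k=1..N+1. f k * gam ^ (N + 1 - k)) = gam * (\<Sum>k=1..N. f k * gam ^ (N - k)) + f (N+1)" .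
    have "ln (weight h0 G z u lam gam s (Suc t) i) = gam * ln (weight h0 G z u lam gam s t i) + lam * u (z i) (hyp h0 G z s (Suc t))"
      using True w by (simp add: ln_mult)
    also have "\<dots> = lam * (\<Sum>k=1..N+1. f k * gam ^ (N + 1 - k))"
      unfolding e IH using tk by (simp add: f_def algebra_simps)
    finally show ?thesis using NS by (simp add: f_def)
  next
    case False
    have NS: "Ncount s i (Suc (Suc t)) = N" using False by (auto simp: Ncount_Suc N_def)
    show ?thesis using False IH NS by (simp add: f_def)
  qed
qed

lemma ln_mean:
  fixes w :: "nat \<Rightarrow> real"
  assumes n: "n \<ge> 1" and pos: "\<And>j. w j > 0"
  shows "(\<Sum>j=1..n. ln (w j)) \<le> real n * ln ((\<Sum>j=1..n. w j) / real n)"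
proof -
  define m where "m = (\<Sum>j=1..n. w j) / real n"
  have sp: "(\<Sum>j=1..n. w j) > 0" using n pos by (intro sum_pos) auto
  have m: "m > 0" using sp n unfolding m_def by simp
  have "(\<Sum>j=1..n. ln (w j) - ln m) \<le> (\<Sum>j=1..n. w j / m - 1)"
  proof (rule sum_mono)
    fix j
    have "ln (w j) - ln m = ln (w j / m)" using pos[of j] m by (simp add: ln_div)
    also have "\<dots> \<le> w j / m - 1" using pos m by (intro ln_le_minus_one) simp
    finally show "ln (w j) - ln m \<le> w j / m - 1" .
  qed
  also have "\<dots> = (\<Sum>j=1..n. w j) / m - real n"
    by (simp add: sum_subtractf sum_divide_distrib)
  also have "\<dots> = 0" using n sp unfolding m_def by simp
  finally show ?thesis by (simp add: sum_subtractf m_def)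
qed


lemma step_bound:
  assumes n: "n \<ge> 1" and t: "1 \<le> t" "t \<le> T"
  shows "ln (real n * condprob n h0 G z u lam gam s t (s t)) \<le>
    lam / real n * (\<Sum>i=1..n.
          (\<Sum>j=1..Ncount s (s t) t.
              u (z (s t)) (hyp h0 G z s (tau T s (s t) j)) * gam ^ (Ncount s (s t) t - j))
        - (\<Sum>k=1..Ncount s i t.
              u (z i) (hyp h0 G z s (tau T s i k)) * gam ^ (Ncount s i t - k)))"
proof -
  define W where "W j = weight h0 G z u lam gam s (t - 1) j" for j
  define B where "B i = (\<Sum>k=1..Ncount s i t.
              u (z i) (hyp h0 G z s (tau T s i k)) * gam ^ (Ncount s i t - k))" for i
  have lw: "ln (W i) = lam * B i" for i
  proof -
    have "t - 1 < T" "Suc (t - 1) = t" using t by auto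
    then show ?thesis unfolding W_def B_def using ln_weight[of "t - 1" T h0 G z u lam gam s i] by simp
  qed
  have Wp: "W j > 0" for j unfolding W_def by (rule weight_pos)
  define S where "S = (\<Sum>j=1..n. W j)"
  have Sp: "S > 0" unfolding S_def using n Wp by (intro sum_pos) auto
  have c: "condprob n h0 G z u lam gam s t (s t) = W (s t) / S"
    unfolding condprob_def W_def S_def by simp
  have "real n * (W (s t) / S) = W (s t) / (S / real n)" using n by simp
  then have "ln (real n * condprob n h0 G z u lam gam s t (s t)) = ln (W (s t) / (S / real n))"
    using c by (simp add: mult.commute)
  also have "\<dots> = ln (W (s t)) - ln (S / real n)"
    using Wp[of "s t"] Sp n by (simp add: ln_div ln_mult)
  also have "\<dots> \<le> ln (W (s t)) - (\<Sum>j=1..n. ln (W j)) / real n"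
  proof -
    have "(\<Sum>j=1..n. ln (W j)) \<le> real n * ln (S / real n)"
      unfolding S_def by (rule ln_mean[OF n Wp])
    then have "(\<Sum>j=1..n. ln (W j)) / real n \<le> ln (S / real n)"
      using n by (simp add: divide_le_eq mult.commute)
    then show ?thesis by simp
  qed
  also have "\<dots> = lam / real n * (\<Sum>i=1..n. B (s t) - B i)"
  proof -
    have "lam / real n * (\<Sum>i=1..n. B (s t) - B i) = (\<Sum>i=1..n. lam * B (s t) - lam * B i) / real n"
      by (simp add: sum_distrib_left right_diff_distrib sum_divide_distrib diff_divide_distrib)
    also have "\<dots> = (real n * ln (W (s t)) - (\<Sum>j=1..n. ln (W j))) / real n"
      by (simp add: sum_subtractf lw)
    also have "\<dots> = ln (W (s t)) - (\<Sum>j=1..n. ln (W j)) / real n"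
      using n by (simp add: diff_divide_distrib)
    finally show ?thesis by simp
  qed
  finally show ?thesis unfolding B_def .
qed

theorem theorem4:
  fixes n T :: nat and z :: "nat \<Rightarrow> 'z" and h0 :: 'h
    and G :: "nat \<Rightarrow> 'h \<Rightarrow> 'z \<Rightarrow> 'h" and u :: "'z \<Rightarrow> 'h \<Rightarrow> real"
    and lam gam :: real
  assumes "n \<ge> 1" and "lam \<ge> 0" and "0 < gam" and "gam < 1"
  shows "KL n T h0 G z u lam gam \<le>
    (\<Sum>t=2..T. \<Sum>s\<in>seqs n T. posterior n T h0 G z u lam gam s *
       (lam / real n * (\<Sum>i=1..n.
          (\<Sum>j=1..Ncount s (s t) t.
              u (z (s t)) (hyp h0 G z s (tau T s (s t) j)) * gam ^ (Ncount s (s t) t - j))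
        - (\<Sum>k=1..Ncount s i t.
              u (z i) (hyp h0 G z s (tau T s i k)) * gam ^ (Ncount s i t - k)))))"
proof -
  note n = assms(1)
  define P where "P s = posterior n T h0 G z u lam gam s" for s
  define c where "c s t = condprob n h0 G z u lam gam s t (s t)" for s t
  define bd where "bd s t = lam / real n * (\<Sum>i=1..n.
          (\<Sum>j=1..Ncount s (s t) t.
              u (z (s t)) (hyp h0 G z s (tau T s (s t) j)) * gam ^ (Ncount s (s t) t - j))
        - (\<Sum>k=1..Ncount s i t.
              u (z i) (hyp h0 G z s (tau T s i k)) * gam ^ (Ncount s i t - k)))" for s t
  have cp: "c s t > 0" for s t
  proof -
    have "(\<Sum>j=1..n. weight h0 G z u lam gam s (t - 1) j) > 0"
      using n by (intro sum_pos) (auto intro: weight_pos)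
    then show ?thesis unfolding c_def condprob_def by (simp add: weight_pos)
  qed
  have Pc: "P s = (\<Prod>t=1..T. c s t)" for s unfolding P_def posterior_def c_def by simp
  have Pnn: "P s \<ge> 0" for s unfolding Pc using cp by (simp add: prod_nonneg less_imp_le)
  have bd1: "bd s 1 = 0" for s
  proof -
    have "Ncount s i 1 = 0" for i unfolding Ncount_def by simp
    then show ?thesis unfolding bd_def by simp
  qed
  have pt: "P s * ln (P s / prior n T s) \<le> P s * (\<Sum>t=2..T. bd s t)" for s
  proof (rule mult_left_mono[OF _ Pnn])
    have "P s / prior n T s = (\<Prod>t=1..T. real n * c s t)"
      unfolding Pc prior_def by (simp add: prod.distrib)
    moreover have "ln (\<Prod>t=1..T. real n * c s t) = (\<Sum>t=1..T. ln (real n * c s t))"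
      using n cp by (intro ln_prod) (auto simp: less_imp_neq[OF cp, symmetric])
    ultimately have "ln (P s / prior n T s) = (\<Sum>t=1..T. ln (real n * c s t))" by simp
    also have "\<dots> \<le> (\<Sum>t=1..T. bd s t)"
      unfolding c_def bd_def by (rule sum_mono) (rule step_bound[OF n], auto)
    also have "\<dots> = (\<Sum>t=2..T. bd s t)"
    proof (cases "T = 0")
      case True then show ?thesis by simp
    next
      case False
      then have "(\<Sum>t=1..T. bd s t) = bd s 1 + (\<Sum>t=Suc 1..T. bd s t)"
        by (intro sum.atLeast_Suc_atMost) simp
      then show ?thesis using bd1 by (simp add: numeral_2_eq_2)
    qed
    finally show "ln (P s / prior n T s) \<le> (\<Sum>t=2..T. bd s t)" .
  qed
  have "KL n T h0 G z u lam gam = (\<Sum>s\<in>seqs n T. P s * ln (P s / prior n T s))"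
    unfolding KL_def P_def by simp
  also have "\<dots> \<le> (\<Sum>s\<in>seqs n T. P s * (\<Sum>t=2..T. bd s t))"
    by (rule sum_mono) (rule pt)
  also have "\<dots> = (\<Sum>t=2..T. \<Sum>s\<in>seqs n T. P s * bd s t)"
    unfolding sum_distrib_left by (rule sum.swap)
  finally show ?thesis unfolding P_def bd_def .
qed

end
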